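(* Let $H$ and $L$ be Hilbert spaces, let $T:H\to L$ be a bounded linear operator, and let $\mathcal{A}\subset H$ be nonempty. Suppose $T$ is bi-Lipschitz from $\mathcal{A}$ to $L$ with constants $\alpha,\beta>0$, i.e. $\alpha\|f_1-f_2\|^2\le\|T(f_1-f_2)\|^2\le\beta\|f_1-f_2\|^2$ for all $f_1,f_2\in\mathcal{A}$. Let $f\in H$, $e\in L$ and $g=Tf+e$. Let $\epsilon,\delta>0$. Let $f_{opt}^\epsilon\in\mathcal{A}$ be any element with $\|g-Tf_{opt}^\epsilon\|^2\le\inf_{h\in\mathcal{A}}\|g-Th\|^2+\epsilon$, and let $f_{\mathcal{A}}^\delta\in\mathcal{A}$ be any element with $\|f-f_{\mathcal{A}}^\delta\|^2\le\inf_{h\in\mathcal{A}}\|f-h\|^2+\delta$. Then \[ \|f-f_{opt}^\epsilon\|\le\frac{2}{\sqrt{\alpha}}\|T(f-f_{\mathcal{A}}^\delta)+e\|+\inf_{\tilde f\in\mathcal{A}}\|f-\tilde f\|+\frac{\sqrt{\epsilon}}{\sqrt{\alpha}}+\sqrt{\delta}. \]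
   Context: The elements $f_{opt}^\epsilon$ ("$\epsilon$-optimal estimates") and $f_{\mathcal{A}}^\delta$ (a "$\delta$-projection" of $f$ onto $\mathcal{A}$) exist since $\mathcal{A}$ is nonempty and $\epsilon,\delta>0$. *)

theory Defs
  imports "HOL-Analysis.Analysis"
begin

end

theory Submission
  imports Defs
begin

theorem mainTheorem2:
  fixes T :: "'h::{real_inner, complete_space} \<Rightarrow> 'l::{real_inner, complete_space}"
    and A :: "'h set" and f f_opt f_A :: 'h and e g :: 'l
    and \<alpha> \<beta> \<epsilon> \<delta> :: real
  assumes "bounded_linear T"
    and "A \<noteq> {}"
    and "\<alpha> > 0" and "\<beta> > 0"
    and "\<And>f1 f2. f1 \<in> A \<Longrightarrow> f2 \<in> A \<Longrightarrow>
           \<alpha> * (norm (f1 - f2))^2 \<le> (norm (T (f1 - f2)))^2 \<and>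
           (norm (T (f1 - f2)))^2 \<le> \<beta> * (norm (f1 - f2))^2"
    and "g = T f + e"
    and "\<epsilon> > 0" and "\<delta> > 0"
    and "f_opt \<in> A"
    and "(norm (g - T f_opt))^2 \<le> (INF h\<in>A. (norm (g - T h))^2) + \<epsilon>"
    and "f_A \<in> A"
    and "(norm (f - f_A))^2 \<le> (INF h\<in>A. (norm (f - h))^2) + \<delta>"
  shows "norm (f - f_opt) \<le> 2 / sqrt \<alpha> * norm (T (f - f_A) + e)
           + (INF h\<in>A. norm (f - h)) + sqrt \<epsilon> / sqrt \<alpha> + sqrt \<delta>"
proof -
  note lin = \<open>bounded_linear T\<close>
  have sq: "\<And>a b c::real. 0 \<le> a \<Longrightarrow> 0 \<le> b \<Longrightarrow> 0 \<le> c \<Longrightarrow> a^2 \<le> b^2 + c \<Longrightarrow> a \<le> b + sqrt c"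
  proof -
    fix a b c :: real assume h: "0 \<le> a" "0 \<le> b" "0 \<le> c" "a^2 \<le> b^2 + c"
    have "b^2 + c \<le> (b + sqrt c)^2" using h by (simp add: power2_eq_square algebra_simps)
    hence "a^2 \<le> (b + sqrt c)^2" using h(4) by linarith
    thus "a \<le> b + sqrt c" using h by (meson power2_le_imp_le add_nonneg_nonneg real_sqrt_ge_zero)
  qed
  have bdd1: "bdd_below ((\<lambda>h. (norm (f - h))^2) ` A)" by (rule bdd_belowI[of _ 0]) auto
  have bdd2: "bdd_below ((\<lambda>h. (norm (g - T h))^2) ` A)" by (rule bdd_belowI[of _ 0]) auto
  have c1: "norm (f - f_A) - sqrt \<delta> \<le> (INF h\<in>A. norm (f - h))"
  proof (rule cINF_greatest[OF \<open>A \<noteq> {}\<close>])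
    fix h assume "h \<in> A"
    have "(INF h\<in>A. (norm (f - h))^2) \<le> (norm (f - h))^2" using cINF_lower[OF bdd1 \<open>h \<in> A\<close>] .
    hence "(norm (f - f_A))^2 \<le> (norm (f - h))^2 + \<delta>" using assms(12) by linarith
    hence "norm (f - f_A) \<le> norm (f - h) + sqrt \<delta>" using sq \<open>\<delta> > 0\<close> by simp
    thus "norm (f - f_A) - sqrt \<delta> \<le> norm (f - h)" by simp
  qed
  have "(INF h\<in>A. (norm (g - T h))^2) \<le> (norm (g - T f_A))^2" using cINF_lower[OF bdd2 \<open>f_A \<in> A\<close>] .
  hence "(norm (g - T f_opt))^2 \<le> (norm (g - T f_A))^2 + \<epsilon>" using assms(10) by linarith
  hence c2: "norm (g - T f_opt) \<le> norm (g - T f_A) + sqrt \<epsilon>" using sq \<open>\<epsilon> > 0\<close> by simp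
  have gA: "g - T f_A = T (f - f_A) + e" using assms(6) linear_diff[OF bounded_linear.linear[OF lin]] by (simp add: algebra_simps)
  have "T (f_A - f_opt) = (g - T f_opt) - (g - T f_A)" using linear_diff[OF bounded_linear.linear[OF lin]] by simp
  hence tri: "norm (T (f_A - f_opt)) \<le> norm (g - T f_opt) + norm (g - T f_A)" by (metis norm_triangle_ineq4)
  have gA': "norm (g - T f_A) = norm (T (f - f_A) + e)" by (rule arg_cong[OF gA])
  have c3: "norm (T (f_A - f_opt)) \<le> 2 * norm (T (f - f_A) + e) + sqrt \<epsilon>" using tri c2 gA' by linarith
  have "\<alpha> * (norm (f_A - f_opt))^2 \<le> (norm (T (f_A - f_opt)))^2" using assms(5)[OF \<open>f_A \<in> A\<close> \<open>f_opt \<in> A\<close>] by blast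
  hence "(sqrt \<alpha> * norm (f_A - f_opt))^2 \<le> (norm (T (f_A - f_opt)))^2" using \<open>\<alpha> > 0\<close> by (simp add: power_mult_distrib)
  hence "sqrt \<alpha> * norm (f_A - f_opt) \<le> norm (T (f_A - f_opt))" by (rule power2_le_imp_le) auto
  hence "sqrt \<alpha> * norm (f_A - f_opt) \<le> 2 * norm (T (f - f_A) + e) + sqrt \<epsilon>" using c3 by linarith
  hence c4: "norm (f_A - f_opt) \<le> (2 * norm (T (f - f_A) + e) + sqrt \<epsilon>) / sqrt \<alpha>" using \<open>\<alpha> > 0\<close>
    by (simp add: pos_le_divide_eq mult.commute)
  have "norm (f - f_opt) \<le> norm (f - f_A) + norm (f_A - f_opt)" using norm_triangle_ineq[of "f - f_A" "f_A - f_opt"] by simp 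
  also have "(2 * norm (T (f - f_A) + e) + sqrt \<epsilon>) / sqrt \<alpha> = 2 / sqrt \<alpha> * norm (T (f - f_A) + e) + sqrt \<epsilon> / sqrt \<alpha>"
    by (simp add: add_divide_distrib)
  ultimately show ?thesis using c1 c4 by linarith
qed

end
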